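(* Let $I$ be an instance and suppose $M\subseteq\mathrm{tent}(I)$ is safe with respect to $I$. Then every match in $M$ is finalizable in $I$.
   Context: An instance $I$ consists of finite disjoint sets $R$ (residents) and $H$ (hospitals), a positive integer quota $q_h$ for each $h\in H$, for each $r\in R$ a preference list of $r$ (a sequence of distinct members of $H$, not necessarily all), and for each $h\in H$ a preference list of $h$ (a sequence of distinct members of $R$). A list is complete if it contains every member of the opposite side; an instance is complete if all lists are complete. A match is a pair $(r,h)\in R\times H$. For a set $M$ of matches, $\mathrm{res}_h M=\{r:(r,h)\in M\}$, $\mathrm{res}\,M=\{r:(r,h)\in M\text{ for some }h\}$. $J$ is an extension of $I$ (same $R,H$, quotas) if every list of $J$ has the corresponding list of $I$ as a prefix; a complete extension is a completion. An event is $(r,h)^+$ (proposal) or $(r,h)^-$ (rejection). For an event sequence $\sigma$, $\mathrm{prop}(\sigma)$, $\mathrm{rej}(\sigma)$ are the sets of matches proposed/rejected in $\sigma$, $\mathrm{tent}(\sigma)=\mathrm{prop}(\sigma)\setminus\mathrm{rej}(\sigma)$, and $\mathrm{pend}_I(\sigma)$ is the set of $(r,h)\in\mathrm{tent}(\sigma)$ with $r$ not on the list of $h$ in $I$. A match $(r,h)\in M$ is ousted from $M$ in $I$ if the list of $h$ in $I$ contains at least $q_h$ residents of $\mathrm{res}_h M$ and either $r$ is not on it or $r$ is preceded on it by at least $q_h$ residents of $\mathrm{res}_h M$. $I$-feasible sequences: the empty sequence is $I$-feasible; if $\sigma$ is $I$-feasible then $\sigma+(r,h)^+$ is $I$-feasible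 if $r\notin\mathrm{res}\,\mathrm{tent}(\sigma)$, $(r,h)\notin\mathrm{prop}(\sigma)$, $h$ is on the list of $r$ in $I$ and $(r,h')\in\mathrm{rej}(\sigma)$ for every $h'$ preceding $h$ on it; and $\sigma+(r,h)^-$ is $I$-feasible if $(r,h)$ is ousted from $\mathrm{prop}(\sigma)$ in $I$ and $(r,h)\notin\mathrm{rej}(\sigma)$. All maximal $I$-feasible sequences contain the same events; $\mathrm{tent}(I),\mathrm{pend}(I)$ denote $\mathrm{tent}(\sigma),\mathrm{pend}_I(\sigma)$ for any maximal $I$-feasible $\sigma$. A match $(r,h)\in\mathrm{tent}(I)$ is finalizable in $I$ if $(r,h)\in\mathrm{tent}(J)$ for every completion $J$ of $I$. Let $M\subseteq\mathrm{tent}(I)$. A resident $r'$ is relevant to $h$ with respect to $M$ if $(r',h)\in M$ or $r'\notin\mathrm{res}\,M$. A match $(r,h)\in M$ is endangered in $M$ with respect to $I$ if: when $(r,h)\in\mathrm{tent}(I)\setminus\mathrm{pend}(I)$, the list of $h$ in $I$ contains at least $q_h$ residents preceding $r$ that are relevant to $h$ with respect to $M$; when $(r,h)\in\mathrm{pend}(I)$, the number of residents relevant to $h$ with respect to $M$ is at least $q_h+1$. $M$ is safe with respect to $I$ if no match of $M$ is endangered in $M$ with respect to $I$. *)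

theory Defs
  imports Main "HOL-Library.Sublist"
begin

text \<open>Instances of the hospitals/residents problem. Residents have type 'r, hospitals type 'h
  (so the two sets are automatically disjoint).\<close>

record ('r, 'h) hr_instance =
  Res   :: "'r set"
  Hos   :: "'h set"
  quota :: "'h \<Rightarrow> nat"
  rpref :: "'r \<Rightarrow> 'h list"
  hpref :: "'h \<Rightarrow> 'r list"

definition wf_instance :: "('r, 'h) hr_instance \<Rightarrow> bool" where
  "wf_instance I \<longleftrightarrow> finite (Res I) \<and> finite (Hos I)
     \<and> (\<forall>h\<in>Hos I. quota I h > 0)
     \<and> (\<forall>r\<in>Res I. distinct (rpref I r) \<and> set (rpref I r) \<subseteq> Hos I)
     \<and> (\<forall>h\<in>Hos I. distinct (hpref I h) \<and> set (hpref I h) \<subseteq> Res I)"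

definition complete_instance :: "('r, 'h) hr_instance \<Rightarrow> bool" where
  "complete_instance I \<longleftrightarrow> (\<forall>r\<in>Res I. set (rpref I r) = Hos I)
     \<and> (\<forall>h\<in>Hos I. set (hpref I h) = Res I)"

definition extension :: "('r, 'h) hr_instance \<Rightarrow> ('r, 'h) hr_instance \<Rightarrow> bool" where
  "extension J I \<longleftrightarrow> wf_instance J \<and> Res J = Res I \<and> Hos J = Hos I
     \<and> (\<forall>h\<in>Hos I. quota J h = quota I h)
     \<and> (\<forall>r\<in>Res I. prefix (rpref I r) (rpref J r))
     \<and> (\<forall>h\<in>Hos I. prefix (hpref I h) (hpref J h))"

definition completion :: "('r, 'h) hr_instance \<Rightarrow> ('r, 'h) hr_instance \<Rightarrow> bool" where
  "completion J I \<longleftrightarrow> extension J I \<and> complete_instance J"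

definition preceding :: "'a list \<Rightarrow> 'a \<Rightarrow> 'a set" where
  "preceding L x = set (takeWhile (\<lambda>y. y \<noteq> x) L)"

definition res_of :: "('r \<times> 'h) set \<Rightarrow> 'r set" where
  "res_of M = fst ` M"

definition res_at :: "'h \<Rightarrow> ('r \<times> 'h) set \<Rightarrow> 'r set" where
  "res_at h M = {r. (r, h) \<in> M}"

datatype ('r, 'h) event = Propose 'r 'h | Reject 'r 'h

definition props :: "('r, 'h) event list \<Rightarrow> ('r \<times> 'h) set" where
  "props \<sigma> = {(r, h). Propose r h \<in> set \<sigma>}"

definition rejs :: "('r, 'h) event list \<Rightarrow> ('r \<times> 'h) set" where
  "rejs \<sigma> = {(r, h). Reject r h \<in> set \<sigma>}"

definition tent_seq :: "('r, 'h) event list \<Rightarrow> ('r \<times> 'h) set" where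
  "tent_seq \<sigma> = props \<sigma> - rejs \<sigma>"

definition pend_seq :: "('r, 'h) hr_instance \<Rightarrow> ('r, 'h) event list \<Rightarrow> ('r \<times> 'h) set" where
  "pend_seq I \<sigma> = {(r, h) \<in> tent_seq \<sigma>. r \<notin> set (hpref I h)}"

definition ousted :: "('r, 'h) hr_instance \<Rightarrow> ('r \<times> 'h) set \<Rightarrow> 'r \<Rightarrow> 'h \<Rightarrow> bool" where
  "ousted I M r h \<longleftrightarrow> (r, h) \<in> M
     \<and> card (set (hpref I h) \<inter> res_at h M) \<ge> quota I h
     \<and> (r \<notin> set (hpref I h) \<or> card (preceding (hpref I h) r \<inter> res_at h M) \<ge> quota I h)"

inductive feasible :: "('r, 'h) hr_instance \<Rightarrow> ('r, 'h) event list \<Rightarrow> bool" for I where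
  feasible_Nil: "feasible I []"
| feasible_Propose: "\<lbrakk> feasible I \<sigma>; r \<in> Res I; r \<notin> res_of (tent_seq \<sigma>); (r, h) \<notin> props \<sigma>;
      h \<in> set (rpref I r); \<forall>h' \<in> preceding (rpref I r) h. (r, h') \<in> rejs \<sigma> \<rbrakk>
    \<Longrightarrow> feasible I (\<sigma> @ [Propose r h])"
| feasible_Reject: "\<lbrakk> feasible I \<sigma>; ousted I (props \<sigma>) r h; (r, h) \<notin> rejs \<sigma> \<rbrakk>
    \<Longrightarrow> feasible I (\<sigma> @ [Reject r h])"

definition maximal_feasible :: "('r, 'h) hr_instance \<Rightarrow> ('r, 'h) event list \<Rightarrow> bool" where
  "maximal_feasible I \<sigma> \<longleftrightarrow> feasible I \<sigma> \<and> (\<nexists>e. feasible I (\<sigma> @ [e]))"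

text \<open>tent(I), pend(I): computed from (any) maximal I-feasible sequence.\<close>
definition tent :: "('r, 'h) hr_instance \<Rightarrow> ('r \<times> 'h) set" where
  "tent I = tent_seq (SOME \<sigma>. maximal_feasible I \<sigma>)"

definition pend :: "('r, 'h) hr_instance \<Rightarrow> ('r \<times> 'h) set" where
  "pend I = pend_seq I (SOME \<sigma>. maximal_feasible I \<sigma>)"

definition finalizable :: "('r, 'h) hr_instance \<Rightarrow> 'r \<times> 'h \<Rightarrow> bool" where
  "finalizable I m \<longleftrightarrow> m \<in> tent I \<and> (\<forall>J. completion J I \<longrightarrow> m \<in> tent J)"

definition relevant :: "('r \<times> 'h) set \<Rightarrow> 'h \<Rightarrow> 'r \<Rightarrow> bool" where
  "relevant M h r' \<longleftrightarrow> (r', h) \<in> M \<or> r' \<notin> res_of M"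

definition endangered :: "('r, 'h) hr_instance \<Rightarrow> ('r \<times> 'h) set \<Rightarrow> 'r \<times> 'h \<Rightarrow> bool" where
  "endangered I M m \<longleftrightarrow> m \<in> M \<and> (case m of (r, h) \<Rightarrow>
     (m \<in> tent I - pend I \<longrightarrow>
        card {r' \<in> preceding (hpref I h) r. relevant M h r'} \<ge> quota I h)
   \<and> (m \<in> pend I \<longrightarrow>
        card {r' \<in> Res I. relevant M h r'} \<ge> quota I h + 1))"

definition safe :: "('r, 'h) hr_instance \<Rightarrow> ('r \<times> 'h) set \<Rightarrow> bool" where
  "safe I M \<longleftrightarrow> M \<subseteq> tent I \<and> (\<forall>m\<in>M. \<not> endangered I M m)"

end

theory Submission
  imports Defs
begin

lemma props_app[simp]:
  "props (s @ [Propose r h]) = insert (r,h) (props s)"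
  "props (s @ [Reject r h]) = props s"
  by (auto simp: props_def)

lemma rejs_app[simp]:
  "rejs (s @ [Propose r h]) = rejs s"
  "rejs (s @ [Reject r h]) = insert (r,h) (rejs s)"
  by (auto simp: rejs_def)

lemma props_mono: "set s \<subseteq> set t \<Longrightarrow> props s \<subseteq> props t"
  by (auto simp: props_def)

lemma rejs_mono: "set s \<subseteq> set t \<Longrightarrow> rejs s \<subseteq> rejs t"
  by (auto simp: rejs_def)

lemma preceding_subset: "preceding L x \<subseteq> set L"
  by (auto simp: preceding_def dest: set_takeWhileD)

lemma not_in_preceding: "x \<notin> preceding L x"
  by (auto simp: preceding_def dest: set_takeWhileD)

lemma preceding_prefix:
  assumes "prefix L L'" "x \<in> set L" shows "preceding L' x = preceding L x"
proof -
  obtain T where "L' = L @ T" using assms(1) by (auto simp: prefix_def)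
  thus ?thesis using assms(2) by (simp add: preceding_def)
qed

lemma preceding_prefix_notin:
  assumes "prefix L L'" "x \<notin> set L" shows "set L \<subseteq> preceding L' x"
proof -
  obtain T where "L' = L @ T" using assms(1) by (auto simp: prefix_def)
  have "takeWhile (\<lambda>y. y \<noteq> x) L' = L @ takeWhile (\<lambda>y. y \<noteq> x) T"
    using \<open>L' = L @ T\<close> assms(2) by (simp add: takeWhile_append)
  thus ?thesis by (auto simp: preceding_def)
qed

lemma preceding_trans:
  assumes "y \<in> preceding L x" shows "preceding L y \<subseteq> preceding L x"
proof -
  let ?tw = "takeWhile (\<lambda>z. z \<noteq> x) L"
  have L: "L = ?tw @ dropWhile (\<lambda>z. z \<noteq> x) L" by simp
  have y: "y \<in> set ?tw" using assms by (simp add: preceding_def)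
  have "takeWhile (\<lambda>z. z \<noteq> y) L = takeWhile (\<lambda>z. z \<noteq> y) ?tw"
    by (subst L, rule takeWhile_append1[OF y]) simp
  thus ?thesis by (auto simp: preceding_def dest: set_takeWhileD)
qed

lemma preceding_total:
  assumes "distinct L" "a \<in> set L" "b \<in> set L" "a \<noteq> b" "b \<notin> preceding L a"
  shows "a \<in> preceding L b"
  using assms
proof (induction L)
  case Nil then show ?case by simp
next
  case (Cons z L)
  show ?case
  proof (cases "z = b")
    case True
    then show ?thesis using Cons.prems by (auto simp: preceding_def)
  next
    case False
    show ?thesis
    proof (cases "z = a")
      case True
      then show ?thesis using Cons.prems False by (auto simp: preceding_def)
    next
      case F2: False
      then show ?thesis using Cons False by (auto simp: preceding_def)
    qed
  qed
qed

lemma ousted_mono: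
  assumes "ousted I A r h" "A \<subseteq> B" shows "ousted I B r h"
proof -
  have sub: "res_at h A \<subseteq> res_at h B" using assms(2) unfolding res_at_def by blast
  have fp: "finite (preceding (hpref I h) r)" by (rule finite_subset[OF preceding_subset finite_set])
  have c1: "card (set (hpref I h) \<inter> res_at h A) \<le> card (set (hpref I h) \<inter> res_at h B)"
    by (rule card_mono) (simp, use sub in blast)
  have c2: "card (preceding (hpref I h) r \<inter> res_at h A) \<le> card (preceding (hpref I h) r \<inter> res_at h B)"
    by (rule card_mono) (simp add: fp, use sub in blast)
  have m: "(r,h) \<in> B" using assms unfolding ousted_def by blast
  show ?thesis using assms(1) c1 c2 m unfolding ousted_def by linarith
qed

lemma feasible_props:
  assumes "feasible I s" "(r,h) \<in> props s"
  shows "r \<in> Res I \<and> h \<in> set (rpref I r) \<and> (\<forall>h'\<in>preceding (rpref I r) h. (r,h') \<in> rejs s)"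
  using assms
proof (induction rule: feasible.induct)
  case feasible_Nil then show ?case by (simp add: props_def)
next
  case (feasible_Propose \<sigma> r' h')
  then show ?case by auto
next
  case (feasible_Reject \<sigma> r' h')
  then show ?case by auto
qed

lemma feasible_rejs:
  assumes "feasible I s" "(r,h) \<in> rejs s"
  shows "ousted I (props s) r h"
  using assms
proof (induction rule: feasible.induct)
  case feasible_Nil then show ?case by (simp add: rejs_def)
next
  case (feasible_Propose \<sigma> r' h')
  then show ?case by (auto intro: ousted_mono)
next
  case (feasible_Reject \<sigma> r' h')
  then show ?case by auto
qed

lemma rejs_props: "feasible I s \<Longrightarrow> (r,h) \<in> rejs s \<Longrightarrow> (r,h) \<in> props s"
  using feasible_rejs by (fastforce simp: ousted_def)

lemma feasible_distinct: "feasible I s \<Longrightarrow> distinct s"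
proof (induction rule: feasible.induct)
  case feasible_Nil then show ?case by simp
next
  case (feasible_Propose \<sigma> r h)
  then show ?case by (auto simp: props_def)
next
  case (feasible_Reject \<sigma> r h)
  then show ?case by (auto simp: rejs_def)
qed

lemma feasible_events:
  assumes "wf_instance I" "feasible I s"
  shows "set s \<subseteq> (\<lambda>(r,h). Propose r h) ` (Res I \<times> Hos I) \<union> (\<lambda>(r,h). Reject r h) ` (Res I \<times> Hos I)"
proof
  fix e assume e: "e \<in> set s"
  show "e \<in> (\<lambda>(r,h). Propose r h) ` (Res I \<times> Hos I) \<union> (\<lambda>(r,h). Reject r h) ` (Res I \<times> Hos I)"
  proof (cases e)
    case (Propose r h)
    hence "(r,h) \<in> props s" using e by (simp add: props_def)
    hence "r \<in> Res I \<and> h \<in> set (rpref I r)" using feasible_props[OF assms(2)] by blast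
    hence "r \<in> Res I" "h \<in> Hos I" using assms(1) by (auto simp: wf_instance_def)
    then show ?thesis using Propose by force
  next
    case (Reject r h)
    hence "(r,h) \<in> rejs s" using e by (simp add: rejs_def)
    hence "(r,h) \<in> props s" by (rule rejs_props[OF assms(2)])
    hence "r \<in> Res I \<and> h \<in> set (rpref I r)" using feasible_props[OF assms(2)] by blast
    hence "r \<in> Res I" "h \<in> Hos I" using assms(1) by (auto simp: wf_instance_def)
    then show ?thesis using Reject by force
  qed
qed

lemma maximal_exists:
  assumes "wf_instance I" shows "\<exists>s. maximal_feasible I s"
proof -
  define E where "E = (\<lambda>(r,h). Propose r h) ` (Res I \<times> Hos I) \<union> (\<lambda>(r,h). Reject r h) ` (Res I \<times> Hos I)"
  have fE: "finite E" using assms by (auto simp: E_def wf_instance_def)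
  have bound: "\<forall>s. feasible I s \<longrightarrow> length s < card E + 1"
  proof (intro allI impI)
    fix s assume fs: "feasible I s"
    have "length s = card (set s)" using feasible_distinct[OF fs] by (simp add: distinct_card)
    also have "\<dots> \<le> card E" using feasible_events[OF assms fs] fE by (auto simp: E_def intro: card_mono)
    finally show "length s < card E + 1" by simp
  qed
  obtain s where s: "feasible I s" "\<forall>t. feasible I t \<longrightarrow> length t \<le> length s"
    using ex_has_greatest_nat[of "feasible I" "[]" length, OF feasible_Nil bound] by blast
  have "\<nexists>e. feasible I (s @ [e])"
  proof
    assume "\<exists>e. feasible I (s @ [e])"
    then obtain e where "feasible I (s @ [e])" by blast
    with s(2) show False by fastforce
  qed
  with s show ?thesis by (auto simp: maximal_feasible_def)
qed

lemma feasible_below_maximal: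
  assumes "feasible I t" "maximal_feasible I \<rho>" and wf: "wf_instance I"
  shows "set t \<subseteq> set \<rho>"
  using assms(1)
proof (induction rule: feasible.induct)
  case feasible_Nil then show ?case by simp
next
  case (feasible_Propose \<sigma> r h)
  have fr: "feasible I \<rho>" and nm: "\<nexists>e. feasible I (\<rho> @ [e])"
    using assms(2) by (auto simp: maximal_feasible_def)
  have rj: "rejs \<sigma> \<subseteq> rejs \<rho>" using rejs_mono[OF feasible_Propose.IH] .
  have "(r,h) \<in> props \<rho>"
  proof (rule ccontr)
    assume np: "(r,h) \<notin> props \<rho>"
    have pre: "\<forall>h'\<in>preceding (rpref I r) h. (r, h') \<in> rejs \<rho>"
      using feasible_Propose.hyps(6) rj by blast
    have "r \<in> res_of (tent_seq \<rho>)"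
    proof (rule ccontr)
      assume "r \<notin> res_of (tent_seq \<rho>)"
      hence "feasible I (\<rho> @ [Propose r h])"
        using feasible.feasible_Propose[OF fr feasible_Propose.hyps(2) _ np feasible_Propose.hyps(5) pre] by blast
      with nm show False by blast
    qed
    then obtain h'' where t'': "(r,h'') \<in> tent_seq \<rho>" by (auto simp: res_of_def)
    hence p'': "(r,h'') \<in> props \<rho>" and nr'': "(r,h'') \<notin> rejs \<rho>" by (auto simp: tent_seq_def)
    have ne: "h'' \<noteq> h" using p'' np by blast
    from feasible_props[OF fr p''] have
      h''in: "h'' \<in> set (rpref I r)" and pre'': "\<forall>h'\<in>preceding (rpref I r) h''. (r, h') \<in> rejs \<rho>"
      by auto
    have "h \<notin> preceding (rpref I r) h''"
    proof
      assume "h \<in> preceding (rpref I r) h''"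
      hence "(r,h) \<in> rejs \<rho>" using pre'' by blast
      hence "(r,h) \<in> props \<rho>" by (rule rejs_props[OF fr])
      with np show False by blast
    qed
    moreover have "distinct (rpref I r)" using wf feasible_Propose.hyps(2)
      by (auto simp: wf_instance_def)
    ultimately have "h'' \<in> preceding (rpref I r) h"
      using preceding_total[of "rpref I r" h'' h] h''in feasible_Propose.hyps(5) ne by blast
    hence "(r,h'') \<in> rejs \<sigma>" using feasible_Propose.hyps(6) by blast
    with rj nr'' show False by blast
  qed
  then show ?case using feasible_Propose.IH by (auto simp: props_def)
next
  case (feasible_Reject \<sigma> r h)
  have fr: "feasible I \<rho>" and nm: "\<nexists>e. feasible I (\<rho> @ [e])"
    using assms(2) by (auto simp: maximal_feasible_def)
  have o: "ousted I (props \<rho>) r h"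
    using ousted_mono[OF feasible_Reject.hyps(2) props_mono[OF feasible_Reject.IH]] .
  have "(r,h) \<in> rejs \<rho>"
  proof (rule ccontr)
    assume "(r,h) \<notin> rejs \<rho>"
    hence "feasible I (\<rho> @ [Reject r h])" using feasible.feasible_Reject[OF fr o] by blast
    with nm show False by blast
  qed
  then show ?case using feasible_Reject.IH by (auto simp: rejs_def)
qed

lemma ousted_ext:
  assumes ext: "extension J I" and h: "h \<in> Hos I" and o: "ousted I A r h"
  shows "ousted J A r h"
proof -
  have q: "quota J h = quota I h" and pf: "prefix (hpref I h) (hpref J h)"
    using ext h by (auto simp: extension_def)
  have sub: "set (hpref I h) \<subseteq> set (hpref J h)" using pf by (rule set_mono_prefix)
  have c1: "card (set (hpref I h) \<inter> res_at h A) \<le> card (set (hpref J h) \<inter> res_at h A)"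
    by (rule card_mono) (simp, use sub in blast)
  have fp: "finite (preceding (hpref J h) r)" by (rule finite_subset[OF preceding_subset finite_set])
  have c2: "r \<notin> set (hpref J h) \<or> card (preceding (hpref J h) r \<inter> res_at h A) \<ge> quota J h"
  proof (cases "r \<in> set (hpref I h)")
    case True
    then show ?thesis using o q preceding_prefix[OF pf True] by (auto simp: ousted_def)
  next
    case False
    have "card (set (hpref I h) \<inter> res_at h A) \<le> card (preceding (hpref J h) r \<inter> res_at h A)"
      by (rule card_mono) (simp add: fp, use preceding_prefix_notin[OF pf False] in blast)
    then show ?thesis using o q by (auto simp: ousted_def)
  qed
  show ?thesis using o c1 c2 q unfolding ousted_def by linarith
qed

lemma feasible_ext:
  assumes ext: "extension J I" and wf: "wf_instance I" and f: "feasible I s"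
  shows "feasible J s"
  using f
proof (induction rule: feasible.induct)
  case feasible_Nil then show ?case by (rule feasible.feasible_Nil)
next
  case (feasible_Propose \<sigma> r h)
  have pf: "prefix (rpref I r) (rpref J r)" using ext feasible_Propose.hyps(2) by (auto simp: extension_def)
  have rJ: "r \<in> Res J" using ext feasible_Propose.hyps(2) by (auto simp: extension_def)
  have hJ: "h \<in> set (rpref J r)" using set_mono_prefix[OF pf] feasible_Propose.hyps(5) by blast
  have pre: "\<forall>h'\<in>preceding (rpref J r) h. (r, h') \<in> rejs \<sigma>"
    using preceding_prefix[OF pf feasible_Propose.hyps(5)] feasible_Propose.hyps(6) by simp
  show ?case by (rule feasible.feasible_Propose[OF feasible_Propose.IH rJ feasible_Propose.hyps(3,4) hJ pre])
next
  case (feasible_Reject \<sigma> r h)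
  have "(r,h) \<in> props \<sigma>" using feasible_Reject.hyps(2) by (simp add: ousted_def)
  hence "r \<in> Res I \<and> h \<in> set (rpref I r)" using feasible_props[OF feasible_Reject.hyps(1)] by blast
  hence h: "h \<in> Hos I" using wf by (auto simp: wf_instance_def)
  show ?case by (rule feasible.feasible_Reject[OF feasible_Reject.IH ousted_ext[OF ext h feasible_Reject.hyps(2)] feasible_Reject.hyps(3)])
qed

lemma no_reject:
  assumes wf: "wf_instance I" and MI: "M \<subseteq> tent_seq \<sigma>" and sf: "safe I M"
    and cJ: "completion J I" and mx: "maximal_feasible I \<sigma>"
    and tI: "tent I = tent_seq \<sigma>" and pI: "pend I = pend_seq I \<sigma>"
    and fJ: "feasible J t"
  shows "\<forall>m\<in>M. m \<notin> rejs t"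
  using fJ
proof (induction rule: feasible.induct)
  case feasible_Nil then show ?case by (simp add: rejs_def)
next
  case (feasible_Propose \<tau> r h)
  then show ?case by simp
next
  case (feasible_Reject \<tau> r h)
  have fs: "feasible I \<sigma>" and nm: "\<nexists>e. feasible I (\<sigma> @ [e])"
    using mx by (auto simp: maximal_feasible_def)
  have ext: "extension J I" and cpl: "complete_instance J" using cJ by (auto simp: completion_def)
  have wfJ: "wf_instance J" and RJ: "Res J = Res I" and HJ: "Hos J = Hos I"
    using ext by (auto simp: extension_def)
  have "(r,h) \<notin> M"
  proof
    assume rhM: "(r,h) \<in> M"
    define P where "P = props \<tau>"
    have rhs: "(r,h) \<in> props \<sigma>" "(r,h) \<notin> rejs \<sigma>" using rhM MI by (auto simp: tent_seq_def)
    have rR: "r \<in> Res I" and hr: "h \<in> set (rpref I r)" using feasible_props[OF fs rhs(1)] by auto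
    have hH: "h \<in> Hos I" using wf rR hr by (auto simp: wf_instance_def)
    have pfh: "prefix (hpref I h) (hpref J h)" and qJ: "quota J h = quota I h"
      using ext hH by (auto simp: extension_def)
    have setJ: "set (hpref J h) = Res I" using cpl hH HJ RJ by (auto simp: complete_instance_def)
    have oJ: "ousted J P r h" using feasible_Reject.hyps(2) by (simp add: P_def)
    have C: "card (preceding (hpref J h) r \<inter> res_at h P) \<ge> quota I h"
      using oJ setJ rR qJ by (auto simp: ousted_def)
    have K: "\<forall>r'\<in>preceding (hpref J h) r \<inter> res_at h P. relevant M h r'"
    proof
      fix r' assume r'in: "r' \<in> preceding (hpref J h) r \<inter> res_at h P"
      show "relevant M h r'"
      proof (rule ccontr)
        assume nrel: "\<not> relevant M h r'"
        then obtain h'' where M'': "(r',h'') \<in> M" and ne: "h'' \<noteq> h"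
          unfolding relevant_def res_of_def by force
        have r'hP: "(r',h) \<in> props \<tau>" using r'in by (simp add: P_def res_at_def)
        from feasible_props[OF feasible_Reject.hyps(1) r'hP] have
          r'RJ: "r' \<in> Res J" and hJ': "h \<in> set (rpref J r')" and
          preJ: "\<forall>h'\<in>preceding (rpref J r') h. (r', h') \<in> rejs \<tau>" by auto
        have s'': "(r',h'') \<in> props \<sigma>" using M'' MI by (auto simp: tent_seq_def)
        from feasible_props[OF fs s''] have r'R: "r' \<in> Res I" and h''I: "h'' \<in> set (rpref I r')"
          and preI: "\<forall>h'\<in>preceding (rpref I r') h''. (r', h') \<in> rejs \<sigma>" by auto
        have pfr: "prefix (rpref I r') (rpref J r')" using ext r'R by (auto simp: extension_def)
        have h''J: "h'' \<in> set (rpref J r')" using set_mono_prefix[OF pfr] h''I by blast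
        have "(r',h'') \<notin> rejs \<tau>" using feasible_Reject.IH M'' by blast
        hence "h'' \<notin> preceding (rpref J r') h" using preJ by blast
        moreover have "distinct (rpref J r')" using wfJ r'RJ by (auto simp: wf_instance_def)
        ultimately have "h \<in> preceding (rpref J r') h''"
          using preceding_total[of "rpref J r'" h h''] hJ' h''J ne by blast
        hence "h \<in> preceding (rpref I r') h''" using preceding_prefix[OF pfr h''I] by simp
        hence rej: "(r',h) \<in> rejs \<sigma>" using preI by blast
        have o': "ousted I (props \<sigma>) r' h" by (rule feasible_rejs[OF fs rej])
        have "ousted I (props \<sigma>) r h"
        proof -
          have c1: "card (set (hpref I h) \<inter> res_at h (props \<sigma>)) \<ge> quota I h"
            using o' by (simp add: ousted_def)
          have c2: "r \<notin> set (hpref I h) \<or> card (preceding (hpref I h) r \<inter> res_at h (props \<sigma>)) \<ge> quota I h"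
          proof (cases "r \<in> set (hpref I h)")
            case False then show ?thesis by simp
          next
            case True
            have eqp: "preceding (hpref J h) r = preceding (hpref I h) r"
              by (rule preceding_prefix[OF pfh True])
            have r'p: "r' \<in> preceding (hpref I h) r" using r'in eqp by blast
            hence r'I: "r' \<in> set (hpref I h)" using preceding_subset by fast
            have c3: "card (preceding (hpref I h) r' \<inter> res_at h (props \<sigma>)) \<ge> quota I h"
              using o' r'I by (simp add: ousted_def)
            have fp: "finite (preceding (hpref I h) r)" by (rule finite_subset[OF preceding_subset finite_set])
            have "card (preceding (hpref I h) r' \<inter> res_at h (props \<sigma>)) \<le> card (preceding (hpref I h) r \<inter> res_at h (props \<sigma>))"
              by (rule card_mono) (simp add: fp, use preceding_trans[OF r'p] in blast)
            then show ?thesis using c3 by simp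
          qed
          show ?thesis using rhs(1) c1 c2 unfolding ousted_def by blast
        qed
        hence "feasible I (\<sigma> @ [Reject r h])" using feasible.feasible_Reject[OF fs _ rhs(2)] by blast
        with nm show False by blast
      qed
    qed
    have fpJ: "finite (preceding (hpref J h) r)" by (rule finite_subset[OF preceding_subset finite_set])
    have notend: "\<not> endangered I M (r,h)" using sf rhM by (auto simp: safe_def)
    have rhT: "(r,h) \<in> tent I" using rhs tI by (simp add: tent_seq_def)
    show False
    proof (cases "r \<in> set (hpref I h)")
      case True
      have eqp: "preceding (hpref J h) r = preceding (hpref I h) r"
        by (rule preceding_prefix[OF pfh True])
      have np: "(r,h) \<notin> pend I" using pI True by (simp add: pend_seq_def)
      have fp: "finite (preceding (hpref I h) r)" by (rule finite_subset[OF preceding_subset finite_set])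
      have "card (preceding (hpref J h) r \<inter> res_at h P) \<le> card {r' \<in> preceding (hpref I h) r. relevant M h r'}"
        by (rule card_mono) (simp add: fp, use K eqp in blast)
      hence "card {r' \<in> preceding (hpref I h) r. relevant M h r'} \<ge> quota I h" using C by linarith
      hence "endangered I M (r,h)" using rhM rhT np by (simp add: endangered_def)
      with notend show False by blast
    next
      case False
      have pd: "(r,h) \<in> pend I" using pI False rhs by (simp add: pend_seq_def tent_seq_def)
      have fR: "finite (Res I)" using wf by (simp add: wf_instance_def)
      have relr: "relevant M h r" using rhM by (simp add: relevant_def)
      have nin: "r \<notin> preceding (hpref J h) r \<inter> res_at h P" using not_in_preceding by fast
      have "card (insert r (preceding (hpref J h) r \<inter> res_at h P)) \<le> card {r' \<in> Res I. relevant M h r'}"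
        by (rule card_mono) (simp add: fR, use K relr rR preceding_subset[of "hpref J h" r] setJ in blast)
      moreover have "card (insert r (preceding (hpref J h) r \<inter> res_at h P)) = card (preceding (hpref J h) r \<inter> res_at h P) + 1"
        using nin fpJ by simp
      ultimately have "card {r' \<in> Res I. relevant M h r'} \<ge> quota I h + 1" using C by linarith
      hence "endangered I M (r,h)" using rhM pd by (simp add: endangered_def)
      with notend show False by blast
    qed
  qed
  then show ?case using feasible_Reject.IH by auto
qed

theorem proposition8:
  fixes I :: "('r, 'h) hr_instance" and M :: "('r \<times> 'h) set"
  assumes "wf_instance I"
    and "M \<subseteq> tent I"
    and "safe I M"
  shows "\<forall>m\<in>M. finalizable I m"
proof
  fix m assume mM: "m \<in> M"
  define \<sigma> where "\<sigma> = (SOME s. maximal_feasible I s)"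
  have mx: "maximal_feasible I \<sigma>" unfolding \<sigma>_def using maximal_exists[OF assms(1)] by (rule someI_ex)
  have tI: "tent I = tent_seq \<sigma>" and pI: "pend I = pend_seq I \<sigma>"
    by (simp_all add: tent_def pend_def \<sigma>_def)
  have MI: "M \<subseteq> tent_seq \<sigma>" using assms(2) tI by simp
  have "\<forall>J. completion J I \<longrightarrow> m \<in> tent J"
  proof (intro allI impI)
    fix J assume cJ: "completion J I"
    have ext: "extension J I" using cJ by (simp add: completion_def)
    have wfJ: "wf_instance J" using ext by (simp add: extension_def)
    define \<rho> where "\<rho> = (SOME s. maximal_feasible J s)"
    have mxJ: "maximal_feasible J \<rho>" unfolding \<rho>_def using maximal_exists[OF wfJ] by (rule someI_ex)
    have fs: "feasible I \<sigma>" using mx by (simp add: maximal_feasible_def)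
    have "set \<sigma> \<subseteq> set \<rho>"
      by (rule feasible_below_maximal[OF feasible_ext[OF ext assms(1) fs] mxJ wfJ])
    hence "props \<sigma> \<subseteq> props \<rho>" by (rule props_mono)
    hence "m \<in> props \<rho>" using mM MI by (auto simp: tent_seq_def)
    moreover have "m \<notin> rejs \<rho>"
      using no_reject[OF assms(1) MI assms(3) cJ mx tI pI] mxJ mM by (auto simp: maximal_feasible_def)
    ultimately show "m \<in> tent J" by (simp add: tent_def tent_seq_def \<rho>_def)
  qed
  then show "finalizable I m" using mM assms(2) by (auto simp: finalizable_def)
qed

end
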